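(* Let $n,m,p$ be positive integers with $m\le n$. Let $b_1,\dots,b_m\in\mathbb{R}^n$ be column vectors with nonnegative integer entries $b_{kj}$ such that the $n\times m$ matrix $B=[b_1,\dots,b_m]$ has rank $m$ and no zero row. Let $A=[a_{ij}]$ be an irreducible $m\times m$ matrix with nonnegative entries, and define $f:\mathbb{R}^n\to\mathbb{R}^n$ by $f(x)=\sum_{i=1}^m\sum_{j=1}^m a_{ij}\,x_1^{b_{1j}}\cdots x_n^{b_{nj}}\,(b_i-b_j)$. Let $C=[c_{ij}]$ be a $p\times n$ matrix each of whose entries is either $0$ or a real number $\ge1$, and define $h:\mathbb{R}^n\to\mathbb{R}^p$ by $h_i(x)=|x_1|^{c_{i1}}\cdots|x_n|^{c_{in}}$. Let $\mathcal{D}=\mathrm{span}\{b_i-b_j: i,j=1,\dots,m\}$, and assume there are no boundary equilibria: whenever $x\in\mathbb{R}^n_{\ge0}$ has some zero coordinate and $x-\bar x\in\mathcal{D}$ for some $\bar x\in\mathbb{R}^n_{>0}$, then $f(x)\neq0$. Let $E_+=\{x\in\mathbb{R}^n_{>0}: f(x)=0\}$ and $\rho(x)=(\ln x_1,\dots,\ln x_n)'$ for $x\in\mathbb{R}^n_{>0}$. Then the following are equivalent: (a) the system $\dot x=f(x)$, $y=h(x)$ is detectable on $\mathbb{R}^n_{>0}$; (b) for all $x,z\in\mathbb{R}^n_{>0}$, if $\rho(x)-\rho(z)\in\ker C$ and $x,z\in E_+$, then $x=z$; (c) $\mathcal{D}^\perp\cap\ker C=\{0\}$; (d) $\mathcal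{D}+\operatorname{im}C'=\mathbb{R}^n$.
   Context: The system is detectable on $\mathbb{R}^n_{>0}$ if for every two trajectories $x(\cdot),z(\cdot)$ of $\dot x=f(x)$ in $\mathbb{R}^n_{>0}$ defined for all $t\ge0$, $h(x(t))\equiv h(z(t))$ implies $|x(t)-z(t)|\to0$ as $t\to\infty$. $C'$ denotes the transpose of $C$; $\mathcal{D}^\perp$ is the orthogonal complement in $\mathbb{R}^n$. *)

theory Defs
  imports "HOL-Analysis.Analysis"
begin

definition pos_orthant :: "(real^'n) set" where
  "pos_orthant = {x. \<forall>k. x $ k > 0}"

definition nonneg_orthant :: "(real^'n) set" where
  "nonneg_orthant = {x. \<forall>k. x $ k \<ge> 0}"

definition realB :: "nat^'m^'n \<Rightarrow> real^'m^'n" where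
  "realB B = (\<chi> k j. real (B $ k $ j))"

definition bcol :: "nat^'m^'n \<Rightarrow> 'm \<Rightarrow> real^'n" where
  "bcol B j = column j (realB B)"

text \<open>Irreducibility of a square matrix: the directed graph with an edge i -> j whenever
  a_ij \<noteq> 0 is strongly connected.\<close>
definition irreducible_matrix :: "real^'m^'m \<Rightarrow> bool" where
  "irreducible_matrix A \<longleftrightarrow> (\<forall>i j. (i, j) \<in> {(i, j). A $ i $ j \<noteq> 0}\<^sup>*)"

definition monom :: "nat^'m^'n \<Rightarrow> 'm \<Rightarrow> real^'n \<Rightarrow> real" where
  "monom B j x = (\<Prod>k\<in>UNIV. (x $ k) ^ (B $ k $ j))"

definition mak_field :: "real^'m^'m \<Rightarrow> nat^'m^'n \<Rightarrow> real^'n \<Rightarrow> real^'n" where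
  "mak_field A B x = (\<Sum>i\<in>UNIV. \<Sum>j\<in>UNIV. (A $ i $ j * monom B j x) *\<^sub>R (bcol B i - bcol B j))"

text \<open>|t|^c with the convention |t|^0 = 1 (note that Isabelle's powr has 0 powr 0 = 0).\<close>
definition abs_pow :: "real \<Rightarrow> real \<Rightarrow> real" where
  "abs_pow t c = (if c = 0 then 1 else \<bar>t\<bar> powr c)"

definition out_map :: "real^'n^'p \<Rightarrow> real^'n \<Rightarrow> real^'p" where
  "out_map C x = (\<chi> i. \<Prod>k\<in>UNIV. abs_pow (x $ k) (C $ i $ k))"

definition stoich_space :: "nat^'m^'n \<Rightarrow> (real^'n) set" where
  "stoich_space B = span {bcol B i - bcol B j | i j. True}"

definition pos_trajectory :: "(real^'n \<Rightarrow> real^'n) \<Rightarrow> (real \<Rightarrow> real^'n) \<Rightarrow> bool" where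
  "pos_trajectory f x \<longleftrightarrow>
     (\<forall>t\<ge>0. x t \<in> pos_orthant \<and> (x has_vector_derivative f (x t)) (at t within {0..}))"

definition detectable_pos :: "(real^'n \<Rightarrow> real^'n) \<Rightarrow> (real^'n \<Rightarrow> real^'p) \<Rightarrow> bool" where
  "detectable_pos f h \<longleftrightarrow>
     (\<forall>x z. pos_trajectory f x \<and> pos_trajectory f z \<and> (\<forall>t\<ge>0. h (x t) = h (z t))
        \<longrightarrow> ((\<lambda>t. norm (x t - z t)) \<longlongrightarrow> 0) at_top)"

definition rho :: "real^'n \<Rightarrow> real^'n" where
  "rho x = (\<chi> k. ln (x $ k))"

definition ker_mat :: "real^'n^'p \<Rightarrow> (real^'n) set" where
  "ker_mat C = {v. C *v v = 0}"

end

theory Submission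
  imports Defs
begin

lemma monom_pos: "x \<in> pos_orthant \<Longrightarrow> monom B j x > 0"
  unfolding monom_def pos_orthant_def by (auto intro!: prod_pos)

lemma bcol_nth: "bcol B j $ k = real (B $ k $ j)"
  by (simp add: bcol_def column_def realB_def)

lemma ln_monom:
  assumes "x \<in> pos_orthant" shows "ln (monom B j x) = bcol B j \<bullet> rho x"
proof -
  have p1: "x$k > 0" for k using assms by (simp add: pos_orthant_def)
  have p: "x$k > 0" "x$k \<noteq> 0" for k using p1[of k] by auto
  have "ln (\<Prod>k\<in>UNIV. x$k ^ B$k$j) = (\<Sum>k\<in>UNIV. ln (x$k ^ B$k$j))"
    by (rule ln_prod) (simp_all add: p)
  then show ?thesis by (simp add: monom_def ln_realpow p inner_vec_def bcol_nth rho_def)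
qed

lemma balance_sum:
  fixes A :: "real^'m^'m" and \<kappa> :: "'m \<Rightarrow> real" and v :: "'m \<Rightarrow> 'a::real_vector"
  assumes "\<forall>k. (\<Sum>j\<in>UNIV. A$k$j * \<kappa> j) = \<kappa> k * (\<Sum>i\<in>UNIV. A$i$k)"
  shows "(\<Sum>i\<in>UNIV. \<Sum>j\<in>UNIV. (A$i$j * \<kappa> j) *\<^sub>R (v i - v j)) = 0"
proof -
  have "(\<Sum>i\<in>UNIV. \<Sum>j\<in>UNIV. (A$i$j * \<kappa> j) *\<^sub>R (v i - v j))
      = (\<Sum>i\<in>UNIV. \<Sum>j\<in>UNIV. (A$i$j * \<kappa> j) *\<^sub>R v i) - (\<Sum>i\<in>UNIV. \<Sum>j\<in>UNIV. (A$i$j * \<kappa> j) *\<^sub>R v j)"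
    by (simp add: scaleR_diff_right sum_subtractf)
  also have "(\<Sum>i\<in>UNIV. \<Sum>j\<in>UNIV. (A$i$j * \<kappa> j) *\<^sub>R v i) = (\<Sum>i\<in>UNIV. (\<kappa> i * (\<Sum>j\<in>UNIV. A$j$i)) *\<^sub>R v i)"
    by (simp add: scaleR_sum_left[symmetric] assms)
  also have "(\<Sum>i\<in>UNIV. \<Sum>j\<in>UNIV. (A$i$j * \<kappa> j) *\<^sub>R v j) = (\<Sum>j\<in>UNIV. \<Sum>i\<in>UNIV. (A$i$j * \<kappa> j) *\<^sub>R v j)"
    by (rule sum.swap)
  also have "\<dots> = (\<Sum>j\<in>UNIV. (\<kappa> j * (\<Sum>i\<in>UNIV. A$i$j)) *\<^sub>R v j)"
    by (simp add: scaleR_sum_left[symmetric] sum_distrib_left[symmetric] mult.commute)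
  finally show ?thesis by simp
qed

lemma key_ineq:
  fixes p q :: real
  assumes "p > 0" "q > 0"
  shows "q * (ln p - ln q) \<le> 2 * sqrt p * sqrt q - 2 * q"
proof -
  have "ln p - ln q = 2 * ln (sqrt p / sqrt q)"
    using assms by (simp add: ln_div ln_sqrt)
  also have "\<dots> \<le> 2 * (sqrt p / sqrt q - 1)"
    using assms by (intro mult_left_mono ln_le_minus_one) auto
  finally have "q * (ln p - ln q) \<le> q * (2 * (sqrt p / sqrt q - 1))"
    using assms by (intro mult_left_mono) auto
  also have "\<dots> = 2 * sqrt p * sqrt q - 2 * q"
    using assms by (simp add: field_simps)
  finally show ?thesis .
qed

definition cb :: "real^'m^'m \<Rightarrow> nat^'m^'n \<Rightarrow> real^'n \<Rightarrow> bool" where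
  "cb A B e \<longleftrightarrow> e \<in> pos_orthant \<and>
     (\<forall>k. (\<Sum>j\<in>UNIV. A$k$j * monom B j e) = monom B k e * (\<Sum>i\<in>UNIV. A$i$k))"

definition Vf :: "real^'n \<Rightarrow> real^'n \<Rightarrow> real" where
  "Vf e x = (\<Sum>k\<in>UNIV. x$k * ln (x$k) - x$k * ln (e$k) - x$k + e$k)"

definition Uf :: "real^'m^'m \<Rightarrow> nat^'m^'n \<Rightarrow> real^'n \<Rightarrow> real^'n \<Rightarrow> real" where
  "Uf A B e x = (\<Sum>i\<in>UNIV. \<Sum>j\<in>UNIV. A$i$j * monom B j e *
       (sqrt (monom B i x / monom B i e) - sqrt (monom B j x / monom B j e))^2)"

lemma Vf_lower:
  assumes "e \<in> pos_orthant" "x \<in> pos_orthant"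
  shows "(\<Sum>k\<in>UNIV. (sqrt (x$k) - sqrt (e$k))^2) \<le> Vf e x"
  unfolding Vf_def
proof (rule sum_mono)
  fix k
  have p: "e$k > 0" "x$k > 0" using assms by (auto simp: pos_orthant_def)
  have "x$k * (ln (e$k) - ln (x$k)) \<le> 2 * sqrt (e$k) * sqrt (x$k) - 2 * x$k"
    using key_ineq[OF p] .
  moreover have "(sqrt (x$k) - sqrt (e$k))^2 = x$k - 2 * sqrt (e$k) * sqrt (x$k) + e$k"
    using p by (simp add: power2_eq_square algebra_simps)
  ultimately show "(sqrt (x$k) - sqrt (e$k))^2 \<le> x$k * ln (x$k) - x$k * ln (e$k) - x$k + e$k"
    by (simp add: algebra_simps)
qed

lemma Vf_nonneg: "e \<in> pos_orthant \<Longrightarrow> x \<in> pos_orthant \<Longrightarrow> Vf e x \<ge> 0"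
  by (rule order_trans[OF _ Vf_lower]) (auto intro: sum_nonneg)

lemma Uf_nonneg: "\<forall>i j. A$i$j \<ge> 0 \<Longrightarrow> e \<in> pos_orthant \<Longrightarrow> Uf A B e x \<ge> 0"
  unfolding Uf_def by (intro sum_nonneg mult_nonneg_nonneg) (auto intro: less_imp_le monom_pos)

lemma lyap:
  assumes Anonneg: "\<forall>i j. A$i$j \<ge> 0" and cb: "cb A B e" and x: "x \<in> pos_orthant"
  shows "(rho x - rho e) \<bullet> mak_field A B x \<le> - Uf A B e x"
proof -
  have e: "e \<in> pos_orthant" using cb by (simp add: cb_def)
  define \<kappa> where "\<kappa> j = monom B j e" for j
  define P where "P j = monom B j x / monom B j e" for j
  have kp: "\<kappa> j > 0" for j using monom_pos[OF e] by (simp add: \<kappa>_def)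
  have Pp: "P j > 0" for j using monom_pos[OF e, of B j] monom_pos[OF x, of B j] by (simp add: P_def)
  have mx: "monom B j x = \<kappa> j * P j" for j using kp[of j] by (simp add: P_def \<kappa>_def)
  have lnP1: "ln (P i) = bcol B i \<bullet> rho x - bcol B i \<bullet> rho e" for i
    using ln_monom[OF x, of B i] ln_monom[OF e, of B i] monom_pos[OF x, of B i] monom_pos[OF e, of B i]
    by (simp add: P_def ln_div)
  have lnP: "(rho x - rho e) \<bullet> (bcol B i - bcol B j) = ln (P i) - ln (P j)" for i j
    unfolding lnP1 by (simp add: inner_diff_left inner_diff_right inner_commute)
  have "(rho x - rho e) \<bullet> mak_field A B x
     = (\<Sum>i\<in>UNIV. \<Sum>j\<in>UNIV. A$i$j * \<kappa> j * (P j * (ln (P i) - ln (P j))))"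
    unfolding mak_field_def by (simp add: inner_sum_right lnP mx mult_ac)
  also have "\<dots> \<le> (\<Sum>i\<in>UNIV. \<Sum>j\<in>UNIV. A$i$j * \<kappa> j * ((P i - P j) - (sqrt (P i) - sqrt (P j))^2))"
  proof (intro sum_mono mult_left_mono)
    fix i j
    have "P j * (ln (P i) - ln (P j)) \<le> 2 * sqrt (P i) * sqrt (P j) - 2 * P j"
      by (rule key_ineq[OF Pp Pp])
    moreover have "(sqrt (P i) - sqrt (P j))^2 = P i - 2 * sqrt (P i) * sqrt (P j) + P j"
      using Pp[of i] Pp[of j] by (simp add: power2_eq_square algebra_simps)
    ultimately show "P j * (ln (P i) - ln (P j)) \<le> (P i - P j) - (sqrt (P i) - sqrt (P j))^2"
      by simp
    show "0 \<le> A$i$j * \<kappa> j" using Anonneg kp by (simp add: less_imp_le)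
  qed
  also have "\<dots> = (\<Sum>i\<in>UNIV. \<Sum>j\<in>UNIV. (A$i$j * \<kappa> j) *\<^sub>R (P i - P j)) - Uf A B e x"
    unfolding Uf_def by (simp add: P_def \<kappa>_def right_diff_distrib sum_subtractf)
  also have "(\<Sum>i\<in>UNIV. \<Sum>j\<in>UNIV. (A$i$j * \<kappa> j) *\<^sub>R (P i - P j)) = 0"
    by (rule balance_sum) (use cb in \<open>simp add: cb_def \<kappa>_def\<close>)
  finally show ?thesis by simp
qed

lemma field_in_D: "mak_field A B x \<in> stoich_space B"
  unfolding mak_field_def stoich_space_def
  by (intro span_sum span_mul span_base) blast

lemma orth_D:
  "u \<in> orthogonal_comp (stoich_space B) \<longleftrightarrow> (\<forall>i j. bcol B i \<bullet> u = bcol B j \<bullet> u)"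
proof
  assume "u \<in> orthogonal_comp (stoich_space B)"
  then have "orthogonal (bcol B i - bcol B j) u" for i j
    unfolding orthogonal_comp_def stoich_space_def by (auto intro: span_base)
  then show "\<forall>i j. bcol B i \<bullet> u = bcol B j \<bullet> u"
    by (auto simp: orthogonal_def inner_diff_left)
next
  assume H: "\<forall>i j. bcol B i \<bullet> u = bcol B j \<bullet> u"
  have "{bcol B i - bcol B j | i j. True} \<subseteq> orthogonal_comp {u}"
    using H by (auto simp: orthogonal_comp_def orthogonal_def inner_diff_right inner_commute)
  then have "stoich_space B \<subseteq> orthogonal_comp {u}"
    unfolding stoich_space_def by (intro span_minimal subspace_orthogonal_comp)
  then show "u \<in> orthogonal_comp (stoich_space B)"
    by (auto simp: orthogonal_comp_def orthogonal_commute)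
qed

lemma traj_pos: "pos_trajectory f x \<Longrightarrow> t \<ge> 0 \<Longrightarrow> x t \<in> pos_orthant"
  by (simp add: pos_trajectory_def)

lemma traj_pos_nth: "pos_trajectory f x \<Longrightarrow> t \<ge> 0 \<Longrightarrow> x t $ k > 0"
  by (simp add: pos_trajectory_def pos_orthant_def)

lemma conservation:
  assumes tr: "pos_trajectory (mak_field A B) x" and t: "t \<ge> 0"
  shows "x t - x 0 \<in> stoich_space B"
proof -
  have "w \<bullet> (x t - x 0) = 0" if w: "w \<in> orthogonal_comp (stoich_space B)" for w
  proof -
    have "((\<lambda>s. w \<bullet> x s) has_field_derivative 0) (at s within {0..})" if "s \<in> {0..}" for s
    proof -
      have d: "(x has_vector_derivative mak_field A B (x s)) (at s within {0..})"
        using tr that by (simp add: pos_trajectory_def)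
      have "((\<lambda>s. w \<bullet> x s) has_vector_derivative w \<bullet> mak_field A B (x s)) (at s within {0..})"
        by (rule bounded_linear.has_vector_derivative[OF bounded_linear_inner_right d])
      moreover have "w \<bullet> mak_field A B (x s) = 0"
        using w field_in_D[of A B "x s"] by (auto simp: orthogonal_comp_def orthogonal_def inner_commute)
      ultimately show ?thesis by (simp add: has_real_derivative_iff_has_vector_derivative)
    qed
    then obtain c where "\<forall>s\<in>{0..}. w \<bullet> x s = c"
      using has_field_derivative_zero_constant[of "{0..}" "\<lambda>s. w \<bullet> x s"] by auto
    then show ?thesis using t by (simp add: inner_diff_right)
  qed
  then have "x t - x 0 \<in> orthogonal_comp (orthogonal_comp (stoich_space B))"
    by (auto simp: orthogonal_comp_def orthogonal_def)
  then show ?thesis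
    by (simp add: orthogonal_comp_self stoich_space_def)
qed

lemma V_deriv:
  assumes xt: "x t \<in> pos_orthant"
    and d: "(x has_vector_derivative v) (at t within S)"
  shows "((\<lambda>s. Vf e (x s)) has_field_derivative ((rho (x t) - rho e) \<bullet> v)) (at t within S)"
proof -
  have dk: "((\<lambda>s. x s $ k) has_field_derivative v $ k) (at t within S)" for k
    using bounded_linear.has_vector_derivative[OF bounded_linear_vec_nth d]
    by (simp add: has_real_derivative_iff_has_vector_derivative)
  have pk: "x t $ k > 0" for k using xt by (simp add: pos_orthant_def)
  have "((\<lambda>s. x s $ k * ln (x s $ k) - x s $ k * ln (e$k) - x s $ k + e$k) has_field_derivative
          (ln (x t $ k) - ln (e $ k)) * v $ k) (at t within S)" for k
    using pk[of k]
    by (auto intro!: derivative_eq_intros dk simp: field_simps)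
  then have "((\<lambda>s. Vf e (x s)) has_field_derivative (\<Sum>k\<in>UNIV. (ln (x t $ k) - ln (e $ k)) * v $ k)) (at t within S)"
    unfolding Vf_def by (intro DERIV_sum) auto
  then show ?thesis
    by (simp add: inner_vec_def rho_def)
qed

lemma V_decr:
  assumes An: "\<forall>i j. A$i$j \<ge> 0" and cb: "cb A B e"
    and tr: "pos_trajectory (mak_field A B) x"
    and ab: "0 \<le> a" "a \<le> b"
    and U: "\<forall>t\<in>{a..b}. \<delta> \<le> Uf A B e (x t)"
  shows "Vf e (x b) \<le> Vf e (x a) - (b - a) * \<delta>"
proof -
  have "((\<lambda>s. Vf e (x s)) has_derivative (\<lambda>h. ((rho (x t) - rho e) \<bullet> mak_field A B (x t)) * h)) (at t within {a..b})"
    if "a \<le> t" "t \<le> b" for t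
  proof -
    have d: "(x has_vector_derivative mak_field A B (x t)) (at t within {0..})"
      using tr that ab by (simp add: pos_trajectory_def)
    have "((\<lambda>s. Vf e (x s)) has_field_derivative ((rho (x t) - rho e) \<bullet> mak_field A B (x t))) (at t within {0..})"
      by (rule V_deriv[OF traj_pos[OF tr] d]) (use that ab in auto)
    then have "((\<lambda>s. Vf e (x s)) has_field_derivative ((rho (x t) - rho e) \<bullet> mak_field A B (x t))) (at t within {a..b})"
      by (rule DERIV_subset) (use ab in auto)
    then show ?thesis by (simp add: has_field_derivative_def)
  qed
  from mvt_very_simple[OF ab(2) this]
  obtain \<xi> where xi: "\<xi> \<in> {a..b}"
    and eq: "Vf e (x b) - Vf e (x a) = ((rho (x \<xi>) - rho e) \<bullet> mak_field A B (x \<xi>)) * (b - a)"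
    by auto
  have "(rho (x \<xi>) - rho e) \<bullet> mak_field A B (x \<xi>) \<le> - \<delta>"
  proof -
    have "(rho (x \<xi>) - rho e) \<bullet> mak_field A B (x \<xi>) \<le> - Uf A B e (x \<xi>)"
      using lyap[OF An cb traj_pos[OF tr, of \<xi>]] xi ab by auto
    moreover have "\<delta> \<le> Uf A B e (x \<xi>)" using U xi by auto
    ultimately show ?thesis by linarith
  qed
  then have "(b - a) * ((rho (x \<xi>) - rho e) \<bullet> mak_field A B (x \<xi>)) \<le> (b - a) * (- \<delta>)"
    using ab by (intro mult_left_mono) auto
  then show ?thesis using eq by (simp add: mult.commute)
qed

lemma Vf_bound_nth:
  assumes e: "e \<in> pos_orthant" and x: "x \<in> pos_orthant"
  shows "x$k \<le> (sqrt (e$k) + sqrt (Vf e x))^2"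
proof -
  have "(sqrt (x$k) - sqrt (e$k))^2 \<le> (\<Sum>k\<in>UNIV. (sqrt (x$k) - sqrt (e$k))^2)"
    by (rule member_le_sum) auto
  also have "\<dots> \<le> Vf e x" by (rule Vf_lower[OF e x])
  finally have "sqrt ((sqrt (x$k) - sqrt (e$k))^2) \<le> sqrt (Vf e x)"
    by (rule real_sqrt_le_mono)
  then have "sqrt (x$k) \<le> sqrt (e$k) + sqrt (Vf e x)" by simp
  then have "(sqrt (x$k))^2 \<le> (sqrt (e$k) + sqrt (Vf e x))^2"
    using x by (intro power_mono) (auto simp: pos_orthant_def less_imp_le)
  then show ?thesis using x by (simp add: pos_orthant_def less_imp_le)
qed

lemma monom_tendsto: "(y \<longlongrightarrow> l) F \<Longrightarrow> ((\<lambda>n. monom B j (y n)) \<longlongrightarrow> monom B j l) F"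
  unfolding monom_def by (intro tendsto_intros)

lemma monom_nonneg: "(\<forall>k. x$k \<ge> 0) \<Longrightarrow> monom B j x \<ge> 0"
  unfolding monom_def by (auto intro!: prod_nonneg)

lemma Uf_tendsto:
  assumes "e \<in> pos_orthant" "(y \<longlongrightarrow> l) F"
  shows "((\<lambda>n. Uf A B e (y n)) \<longlongrightarrow> Uf A B e l) F"
proof -
  have "monom B j e \<noteq> 0" for j using monom_pos[OF assms(1)] by (metis less_irrefl)
  then show ?thesis
    unfolding Uf_def by (intro tendsto_intros monom_tendsto assms(2)) auto
qed

lemma converge:
  assumes An: "\<forall>i j. A$i$j \<ge> 0" and irr: "irreducible_matrix A"
    and nb: "\<forall>x. x \<in> nonneg_orthant \<and> (\<exists>k. x $ k = 0)
                        \<and> (\<exists>xb \<in> pos_orthant. x - xb \<in> stoich_space B)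
                        \<longrightarrow> mak_field A B x \<noteq> 0"
    and cb: "cb A B e" and tr: "pos_trajectory (mak_field A B) x"
  shows "\<exists>xb lam. xb \<in> pos_orthant \<and> lam > 0 \<and> (\<forall>i. monom B i xb = lam * monom B i e)
             \<and> (x \<longlongrightarrow> xb) at_top"
proof -
  have e: "e \<in> pos_orthant" using cb by (simp add: cb_def)
  have Vnn: "Vf e (x t) \<ge> 0" if "t \<ge> 0" for t
    using Vf_nonneg[OF e traj_pos[OF tr that]] .
  have Vmono: "Vf e (x b) \<le> Vf e (x a)" if "0 \<le> a" "a \<le> b" for a b
    using V_decr[OF An cb tr that, of 0] Uf_nonneg[OF An e] by auto
  have small: "\<exists>t\<ge>T. Uf A B e (x t) < \<delta>" if dT: "\<delta> > 0" "T \<ge> 0" for \<delta> T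
  proof (rule ccontr)
    assume "\<not> ?thesis"
    then have U: "\<forall>t\<in>{T..b}. \<delta> \<le> Uf A B e (x t)" for b by (auto simp: not_less)
    define b where "b = T + Vf e (x T) / \<delta> + 1"
    have "Vf e (x T) / \<delta> \<ge> 0" using Vnn[OF dT(2)] dT by simp
    then have Tb: "T \<le> b" by (simp add: b_def)
    have "Vf e (x b) \<le> Vf e (x T) - (b - T) * \<delta>"
      by (rule V_decr[OF An cb tr dT(2) Tb U])
    also have "(b - T) * \<delta> = Vf e (x T) + \<delta>"
      using dT by (simp add: b_def field_simps)
    finally have "Vf e (x b) < 0" using dT by simp
    moreover have "Vf e (x b) \<ge> 0" using Vnn dT Tb by simp
    ultimately show False by simp
  qed
  have "\<forall>n::nat. \<exists>t. t \<ge> real n \<and> Uf A B e (x t) < 1 / (real n + 1)"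
  proof
    fix n :: nat
    have "1 / (real n + 1) > 0" by simp
    from small[OF this, of "real n"] show "\<exists>t. t \<ge> real n \<and> Uf A B e (x t) < 1 / (real n + 1)"
      by auto
  qed
  then obtain tt where tt: "\<And>n. tt n \<ge> real n" "\<And>n. Uf A B e (x (tt n)) < 1 / (real n + 1)"
    by metis
  have tt0: "tt n \<ge> 0" for n using tt(1)[of n] by linarith
  define V0 where "V0 = Vf e (x 0)"
  have bnd: "norm (x t) \<le> (\<Sum>k\<in>UNIV. (sqrt (e$k) + sqrt V0)^2)" if t: "t \<ge> 0" for t
  proof -
    have "norm (x t) \<le> (\<Sum>k\<in>UNIV. \<bar>x t $ k\<bar>)" by (rule norm_le_l1_cart)
    also have "\<dots> \<le> (\<Sum>k\<in>UNIV. (sqrt (e$k) + sqrt V0)^2)"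
    proof (rule sum_mono)
      fix k
      have V: "Vf e (x t) \<le> V0" using Vmono[of 0 t] t by (simp add: V0_def)
      have "x t $ k \<le> (sqrt (e$k) + sqrt (Vf e (x t)))^2"
        by (rule Vf_bound_nth[OF e traj_pos[OF tr t]])
      also have "\<dots> \<le> (sqrt (e$k) + sqrt V0)^2"
        using V Vnn[OF t] e by (intro power_mono add_left_mono real_sqrt_le_mono) (auto simp: pos_orthant_def less_imp_le)
      finally show "\<bar>x t $ k\<bar> \<le> (sqrt (e$k) + sqrt V0)^2"
        using traj_pos_nth[OF tr t, of k] by simp
    qed
    finally show ?thesis .
  qed
  have "bounded (range (x \<circ> tt))"
    unfolding bounded_iff using bnd tt0 by auto
  then obtain l r where r: "strict_mono r" and lim: "((x \<circ> tt) \<circ> r) \<longlonglongrightarrow> l"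
    using bounded_imp_convergent_subsequence by blast
  define y where "y = (\<lambda>n. x (tt (r n)))"
  have ylim: "y \<longlonglongrightarrow> l" using lim by (simp add: y_def comp_def)
  have ypos: "y n \<in> pos_orthant" for n using traj_pos[OF tr tt0] by (simp add: y_def)
  have lnn: "l $ k \<ge> 0" for k
    by (rule LIMSEQ_le_const[OF tendsto_vec_nth[OF ylim]])
       (use ypos in \<open>auto simp: pos_orthant_def less_imp_le\<close>)
  have lD: "l - x 0 \<in> stoich_space B"
  proof (rule closed_sequentially[of _ "\<lambda>n. y n - x 0"])
    show "closed (stoich_space B)" unfolding stoich_space_def by (rule closed_subspace) simp
    show "y n - x 0 \<in> stoich_space B" for n unfolding y_def by (rule conservation[OF tr tt0])
    show "(\<lambda>n. y n - x 0) \<longlonglongrightarrow> l - x 0" by (intro tendsto_intros ylim)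
  qed
  have Ulim: "(\<lambda>n. Uf A B e (y n)) \<longlonglongrightarrow> Uf A B e l"
    by (rule Uf_tendsto[OF e ylim])
  have inv: "(\<lambda>n. 1 / (real (r n) + 1)) \<longlonglongrightarrow> 0"
  proof -
    have "(\<lambda>n. 1 / (real n + 1)) \<longlonglongrightarrow> 0"
      using LIMSEQ_inverse_real_of_nat by (simp add: inverse_eq_divide add.commute)
    from LIMSEQ_subseq_LIMSEQ[OF this r] show ?thesis by (simp add: comp_def)
  qed
  have "Uf A B e l \<le> 0"
    by (rule LIMSEQ_le[OF Ulim inv]) (use tt(2) in \<open>auto simp: y_def less_imp_le\<close>)
  then have U0: "Uf A B e l = 0" using Uf_nonneg[OF An e, of B l] by simp
  define R where "R i = monom B i l / monom B i e" for i
  have ep: "monom B i e > 0" for i using monom_pos[OF e] .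
  have edge: "R i = R j" if "A$i$j \<noteq> 0" for i j
  proof -
    have nn: "0 \<le> A$i$j * monom B j e * (sqrt (R i) - sqrt (R j))^2" for i j
      using An ep[of j] by (simp add: less_imp_le)
    have "(\<Sum>i\<in>UNIV. \<Sum>j\<in>UNIV. A$i$j * monom B j e * (sqrt (R i) - sqrt (R j))^2) = 0"
      using U0 by (simp add: Uf_def R_def)
    then have "\<forall>i. (\<Sum>j\<in>UNIV. A$i$j * monom B j e * (sqrt (R i) - sqrt (R j))^2) = 0"
      by (subst (asm) sum_nonneg_eq_0_iff) (auto intro: sum_nonneg nn)
    then have "A$i$j * monom B j e * (sqrt (R i) - sqrt (R j))^2 = 0"
      by (subst (asm) sum_nonneg_eq_0_iff) (auto intro: nn)
    then have "(sqrt (R i) - sqrt (R j))^2 = 0" using that ep[of j] by simp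
    then show ?thesis by simp
  qed
  have Rall: "R i = R j" for i j
  proof -
    have "(i, j) \<in> {(i, j). A $ i $ j \<noteq> 0}\<^sup>*" using irr by (simp add: irreducible_matrix_def)
    then show ?thesis
      by (induction rule: rtrancl_induct) (auto dest: edge)
  qed
  define lam where "lam = R undefined"
  have ml: "monom B i l = lam * monom B i e" for i
  proof -
    have "lam = R i" using Rall[of i undefined] by (simp add: lam_def)
    then show ?thesis using ep[of i] by (simp add: R_def)
  qed
  have bal: "\<forall>k. (\<Sum>j\<in>UNIV. A$k$j * monom B j e) = monom B k e * (\<Sum>i\<in>UNIV. A$i$k)"
    using cb by (simp add: cb_def)
  have bal2: "\<forall>k. (\<Sum>j\<in>UNIV. A$k$j * (lam * monom B j e)) = (lam * monom B k e) * (\<Sum>i\<in>UNIV. A$i$k)"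
    using bal by (simp add: sum_distrib_left[symmetric] mult_ac)
  have fl: "mak_field A B l = 0"
    unfolding mak_field_def ml by (rule balance_sum[OF bal2])
  have lpos: "l \<in> pos_orthant"
  proof (rule ccontr)
    assume "l \<notin> pos_orthant"
    then obtain k where "\<not> l$k > 0" by (auto simp: pos_orthant_def)
    then have "l$k = 0" using lnn[of k] by simp
    moreover have "l \<in> nonneg_orthant" using lnn by (simp add: nonneg_orthant_def)
    moreover have "x 0 \<in> pos_orthant" using traj_pos[OF tr] by simp
    ultimately have "mak_field A B l \<noteq> 0" using nb lD by blast
    then show False using fl by simp
  qed
  have lampos: "lam > 0"
    using ml[of undefined] monom_pos[OF lpos, of B undefined] ep[of undefined]
    by (simp add: zero_less_mult_iff)
  have cbl: "cb A B l"
    unfolding cb_def using lpos bal2 by (simp add: ml)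
  have lnz: "l $ k \<noteq> 0" for k
  proof -
    have "l $ k > 0" using lpos by (simp add: pos_orthant_def)
    then show ?thesis by simp
  qed
  have Vl_lim: "(\<lambda>n. Vf l (y n)) \<longlonglongrightarrow> Vf l l"
    unfolding Vf_def by (intro tendsto_intros ylim lnz)
  have Vll: "Vf l l = 0" by (simp add: Vf_def)
  have Vt: "((\<lambda>t. Vf l (x t)) \<longlongrightarrow> 0) at_top"
  proof (rule tendstoI)
    fix \<epsilon> :: real assume "\<epsilon> > 0"
    from tendstoD[OF Vl_lim this] obtain n where n: "dist (Vf l (y n)) (Vf l l) < \<epsilon>"
      by (auto simp: eventually_sequentially)
    have "dist (Vf l (x t)) 0 < \<epsilon>" if "t \<ge> tt (r n)" for t
    proof -
      have "Vf l (x t) \<le> Vf l (y n)"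
        using V_decr[OF An cbl tr tt0 that, of 0] Uf_nonneg[OF An lpos] by (simp add: y_def)
      moreover have "Vf l (x t) \<ge> 0"
        using Vf_nonneg[OF lpos traj_pos[OF tr]] tt0[of "r n"] that by simp
      ultimately show ?thesis using n Vll by (simp add: dist_real_def)
    qed
    then show "\<forall>\<^sub>F t in at_top. dist (Vf l (x t)) 0 < \<epsilon>"
      by (auto simp: eventually_at_top_linorder)
  qed
  have comp: "((\<lambda>t. x t $ k) \<longlongrightarrow> l $ k) at_top" for k
  proof -
    have sq: "((\<lambda>t. (sqrt (x t $ k) - sqrt (l $ k))^2) \<longlongrightarrow> 0) at_top"
    proof (rule tendsto_sandwich[of "\<lambda>_. 0" _ _ "\<lambda>t. Vf l (x t)"])
      show "\<forall>\<^sub>F t in at_top. 0 \<le> (sqrt (x t $ k) - sqrt (l $ k))^2" by simp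
      have "(sqrt (x t $ k) - sqrt (l $ k))^2 \<le> Vf l (x t)" if "t \<ge> 0" for t
      proof -
        have "(sqrt (x t $ k) - sqrt (l $ k))^2 \<le> (\<Sum>k\<in>UNIV. (sqrt (x t $ k) - sqrt (l $ k))^2)"
          by (rule member_le_sum) auto
        also have "\<dots> \<le> Vf l (x t)" by (rule Vf_lower[OF lpos traj_pos[OF tr that]])
        finally show ?thesis .
      qed
      then show "\<forall>\<^sub>F t in at_top. (sqrt (x t $ k) - sqrt (l $ k))^2 \<le> Vf l (x t)"
        by (auto simp: eventually_at_top_linorder)
    qed (auto intro: Vt)
    then have "((\<lambda>t. sqrt ((sqrt (x t $ k) - sqrt (l $ k))^2)) \<longlongrightarrow> 0) at_top"
      using tendsto_real_sqrt by fastforce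
    then have "((\<lambda>t. sqrt (x t $ k) - sqrt (l $ k)) \<longlongrightarrow> 0) at_top"
      by (simp add: tendsto_rabs_zero_iff)
    then have "((\<lambda>t. sqrt (x t $ k)) \<longlongrightarrow> sqrt (l $ k)) at_top"
      by (simp add: Lim_null[symmetric])
    then have "((\<lambda>t. (sqrt (x t $ k))^2) \<longlongrightarrow> (sqrt (l $ k))^2) at_top"
      by (rule tendsto_power)
    then have "((\<lambda>t. (sqrt (x t $ k))^2) \<longlongrightarrow> l $ k) at_top"
      using lnn[of k] by simp
    moreover have "\<forall>\<^sub>F t in at_top. (sqrt (x t $ k))^2 = x t $ k"
      using traj_pos_nth[OF tr] by (auto simp: eventually_at_top_linorder less_imp_le intro!: exI[of _ 0])
    ultimately show ?thesis by (rule Lim_transform_eventually)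
  qed
  have "(x \<longlongrightarrow> l) at_top" by (rule vec_tendstoI) (rule comp)
  then show ?thesis using lpos lampos ml by blast
qed

lemma col_swap:
  fixes A :: "real^'m^'m" and v :: "'m \<Rightarrow> real"
  shows "(\<Sum>k\<in>UNIV. \<Sum>j\<in>UNIV. A$k$j * v j) = (\<Sum>k\<in>UNIV. v k * (\<Sum>i\<in>UNIV. A$i$k))"
  by (subst sum.swap) (simp add: sum_distrib_left mult.commute)

lemma lap_kernel:
  fixes A :: "real^'m^'m"
  assumes An: "\<forall>i j. A$i$j \<ge> 0" and irr: "irreducible_matrix A"
  shows "\<exists>\<kappa>::'m\<Rightarrow>real. (\<forall>j. \<kappa> j > 0) \<and> (\<forall>k. (\<Sum>j\<in>UNIV. A$k$j * \<kappa> j) = \<kappa> k * (\<Sum>i\<in>UNIV. A$i$k))"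
proof -
  define L where "L v = (\<chi> k. (\<Sum>j\<in>UNIV. A$k$j * v$j) - v$k * (\<Sum>i\<in>UNIV. A$i$k))" for v :: "real^'m"
  have lin: "linear L"
    by (rule linearI) (auto simp: L_def vec_eq_iff algebra_simps sum.distrib sum_distrib_left)
  have sum0: "(\<Sum>k\<in>UNIV. L v $ k) = 0" for v
    using col_swap[of A "\<lambda>j. v$j"] by (simp add: L_def sum_subtractf)
  have "\<not> surj L"
  proof
    assume "surj L"
    then obtain v where "L v = (\<chi> k. 1)" by (metis surjD)
    then have "(\<Sum>k\<in>UNIV. L v $ k) = of_nat CARD('m)" by simp
    then show False using sum0 by simp
  qed
  then have "\<not> inj L" using eucl.linear_inj_imp_surj[OF lin] by blast
  then obtain a b where ab: "a \<noteq> b" "L a = L b" by (auto simp: inj_def)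
  define v where "v = a - b"
  have v0: "v \<noteq> 0" using ab by (simp add: v_def)
  have Lv: "L v = 0" using ab lin by (simp add: v_def linear_diff)
  have balv: "(\<Sum>j\<in>UNIV. A$k$j * v$j) = v$k * (\<Sum>i\<in>UNIV. A$i$k)" for k
    using Lv by (simp add: L_def vec_eq_iff)
  define w where "w j = \<bar>v$j\<bar>" for j
  have wnn: "w j \<ge> 0" for j by (simp add: w_def)
  define g where "g k = (\<Sum>j\<in>UNIV. A$k$j * w j) - w k * (\<Sum>i\<in>UNIV. A$i$k)" for k
  have gnn: "g k \<ge> 0" for k
  proof -
    have d: "(\<Sum>i\<in>UNIV. A$i$k) \<ge> 0" using An by (simp add: sum_nonneg)
    have "w k * (\<Sum>i\<in>UNIV. A$i$k) = \<bar>\<Sum>j\<in>UNIV. A$k$j * v$j\<bar>"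
      using d by (simp add: balv w_def abs_mult)
    also have "\<dots> \<le> (\<Sum>j\<in>UNIV. \<bar>A$k$j * v$j\<bar>)" by (rule sum_abs)
    also have "\<dots> = (\<Sum>j\<in>UNIV. A$k$j * w j)" using An by (simp add: w_def abs_mult)
    finally show ?thesis by (simp add: g_def)
  qed
  have "(\<Sum>k\<in>UNIV. g k) = 0"
    using col_swap[of A w] by (simp add: g_def sum_subtractf)
  then have g0: "g k = 0" for k
    using gnn by (subst (asm) sum_nonneg_eq_0_iff) auto
  then have balw: "(\<Sum>j\<in>UNIV. A$k$j * w j) = w k * (\<Sum>i\<in>UNIV. A$i$k)" for k
    by (simp add: g_def)
  obtain j0 where j0: "v$j0 \<noteq> 0" using v0 by (auto simp: vec_eq_iff)
  have wpos: "w k > 0" for k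
  proof (rule ccontr)
    assume "\<not> w k > 0"
    then have wk: "w k = 0" using wnn[of k] by simp
    have step: "w z = 0" if "w y = 0" "A$y$z \<noteq> 0" for y z
    proof -
      have "(\<Sum>j\<in>UNIV. A$y$j * w j) = 0" using balw[of y] that by simp
      then have "\<forall>j. A$y$j * w j = 0"
        using An wnn by (subst (asm) sum_nonneg_eq_0_iff) auto
      then show ?thesis using that by (metis mult_eq_0_iff)
    qed
    have "(k, j0) \<in> {(i, j). A $ i $ j \<noteq> 0}\<^sup>*" using irr by (simp add: irreducible_matrix_def)
    then have "w j0 = 0"
      by (induction rule: rtrancl_induct) (auto intro: wk step)
    then show False using j0 by (simp add: w_def)
  qed
  show ?thesis using wpos balw by blast
qed

lemma exists_cb:
  fixes A :: "real^'m^'m" and B :: "nat^'m^'n"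
  assumes An: "\<forall>i j. A$i$j \<ge> 0" and irr: "irreducible_matrix A"
    and rankB: "rank (realB B) = CARD('m)"
  shows "\<exists>e. cb A B e"
proof -
  obtain \<kappa> where kp: "\<forall>j. \<kappa> j > 0"
    and bal: "\<forall>k. (\<Sum>j\<in>UNIV. A$k$j * \<kappa> j) = \<kappa> k * (\<Sum>i\<in>UNIV. A$i$k)"
    using lap_kernel[OF An irr] by blast
  define T where "T = transpose (realB B)"
  have rT: "rank T = CARD('m)" using rankB by (simp add: T_def rank_transpose)
  have "dim (range (\<lambda>y. T *v y)) = DIM(real^'m)"
    using rT by (simp add: rank_dim_range[symmetric])
  then have "span (range (\<lambda>y. T *v y)) = UNIV"
    by (simp only: eucl.dim_eq_full)
  moreover have "subspace (range (\<lambda>y. T *v y))"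
    by (rule linear_subspace_image[OF matrix_vector_mul_linear subspace_UNIV])
  ultimately have "range (\<lambda>y. T *v y) = UNIV"
    by (metis span_eq_iff)
  then obtain y where y: "T *v y = (\<chi> j. ln (\<kappa> j))"
    by (metis surjD)
  have hby: "bcol B j \<bullet> y = ln (\<kappa> j)" for j
  proof -
    have "bcol B j \<bullet> y = (T *v y) $ j"
      by (simp add: T_def matrix_vector_mult_def transpose_def inner_vec_def bcol_nth realB_def)
    then show ?thesis using y by simp
  qed
  define e where "e = (\<chi> k. exp (y $ k))"
  have epos: "e \<in> pos_orthant" by (simp add: e_def pos_orthant_def)
  have re: "rho e = y" by (simp add: rho_def e_def vec_eq_iff)
  have me: "monom B j e = \<kappa> j" for j
  proof -
    have "monom B j e = exp (ln (monom B j e))" using monom_pos[OF epos, of B j] by simp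
    also have "\<dots> = \<kappa> j" using ln_monom[OF epos, of B j] re hby kp by simp
    finally show ?thesis .
  qed
  have "cb A B e" unfolding cb_def using epos bal by (simp add: me)
  then show ?thesis ..
qed

lemma pos_nth: "x \<in> pos_orthant \<Longrightarrow> x $ k > 0"
  by (simp add: pos_orthant_def)

lemma out_map_pos:
  assumes "x \<in> pos_orthant"
  shows "out_map C x $ i = exp ((C *v rho x) $ i)"
proof -
  have "abs_pow (x$k) c = exp (c * ln (x$k))" for k c
    using pos_nth[OF assms, of k] by (simp add: abs_pow_def powr_def)
  then show ?thesis
    by (simp add: out_map_def matrix_vector_mult_def rho_def exp_sum)
qed

lemma out_eq_iff:
  assumes "x \<in> pos_orthant" "z \<in> pos_orthant"
  shows "out_map C x = out_map C z \<longleftrightarrow> rho x - rho z \<in> ker_mat C"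
proof -
  have "out_map C x = out_map C z \<longleftrightarrow> (\<forall>i. exp ((C *v rho x) $ i) = exp ((C *v rho z) $ i))"
    by (simp add: vec_eq_iff out_map_pos[OF assms(1)] out_map_pos[OF assms(2)])
  also have "\<dots> \<longleftrightarrow> C *v rho x = C *v rho z" by (simp add: vec_eq_iff)
  also have "\<dots> \<longleftrightarrow> rho x - rho z \<in> ker_mat C"
    by (simp add: ker_mat_def matrix_vector_mult_diff_distrib)
  finally show ?thesis .
qed

lemma out_tendsto:
  assumes lim: "(y \<longlongrightarrow> l) F" and ev: "\<forall>\<^sub>F t in F. y t \<in> pos_orthant" and l: "l \<in> pos_orthant"
  shows "((\<lambda>t. out_map C (y t)) \<longlongrightarrow> out_map C l) F"
proof (rule vec_tendstoI)
  fix i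
  have lnz: "l $ k \<noteq> 0" for k using pos_nth[OF l, of k] by simp
  have "((\<lambda>t. exp (\<Sum>k\<in>UNIV. C$i$k * ln (y t $ k))) \<longlongrightarrow> exp (\<Sum>k\<in>UNIV. C$i$k * ln (l $ k))) F"
    by (intro tendsto_intros lim lnz)
  then have "((\<lambda>t. exp ((C *v rho (y t)) $ i)) \<longlongrightarrow> out_map C l $ i) F"
    by (simp add: out_map_pos[OF l] matrix_vector_mult_def rho_def)
  moreover have "\<forall>\<^sub>F t in F. exp ((C *v rho (y t)) $ i) = out_map C (y t) $ i"
    using ev by eventually_elim (simp add: out_map_pos)
  ultimately show "((\<lambda>t. out_map C (y t) $ i) \<longlongrightarrow> out_map C l $ i) F"
    by (rule Lim_transform_eventually)
qed

lemma cb_field_zero: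
  assumes cb: "cb A B e" and m: "\<forall>j. monom B j x = c * monom B j e"
  shows "mak_field A B x = 0"
proof -
  have bal: "\<forall>k. (\<Sum>j\<in>UNIV. A$k$j * monom B j e) = monom B k e * (\<Sum>i\<in>UNIV. A$i$k)"
    using cb by (simp add: cb_def)
  have bal2: "\<forall>k. (\<Sum>j\<in>UNIV. A$k$j * (c * monom B j e)) = (c * monom B k e) * (\<Sum>i\<in>UNIV. A$i$k)"
    using bal by (simp add: sum_distrib_left[symmetric] mult_ac)
  have m': "monom B j x = c * monom B j e" for j using m by simp
  show ?thesis
    unfolding mak_field_def m' by (rule balance_sum[OF bal2])
qed

lemma perp_sum:
  fixes C :: "real^'n^'p" and B :: "nat^'m^'n"
  defines "S \<equiv> {d + w | d w. d \<in> stoich_space B \<and> w \<in> range (\<lambda>v. transpose C *v v)}"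
  shows "orthogonal_comp S = orthogonal_comp (stoich_space B) \<inter> ker_mat C"
proof
  show "orthogonal_comp S \<subseteq> orthogonal_comp (stoich_space B) \<inter> ker_mat C"
  proof
    fix v assume v: "v \<in> orthogonal_comp S"
    have "d \<in> S" if "d \<in> stoich_space B" for d
    proof -
      have "d = d + transpose C *v 0" by simp
      moreover have "transpose C *v 0 \<in> range (\<lambda>v. transpose C *v v)" by blast
      ultimately show "d \<in> S" unfolding S_def using that by blast
    qed
    then have "v \<in> orthogonal_comp (stoich_space B)"
      using v by (auto simp: orthogonal_comp_def)
    moreover
    have "transpose C *v (C *v v) \<in> S"
      unfolding S_def
      by (intro CollectI exI[of _ 0] exI[of _ "transpose C *v (C *v v)"]) (auto intro: span_zero simp: stoich_space_def)
    then have "orthogonal (transpose C *v (C *v v)) v"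
      using v by (auto simp: orthogonal_comp_def)
    then have "(C *v v) \<bullet> (C *v v) = 0"
      by (simp add: orthogonal_def dot_lmul_matrix)
    then have "v \<in> ker_mat C" by (simp add: ker_mat_def)
    ultimately show "v \<in> orthogonal_comp (stoich_space B) \<inter> ker_mat C" by simp
  qed
next
  show "orthogonal_comp (stoich_space B) \<inter> ker_mat C \<subseteq> orthogonal_comp S"
  proof
    fix v assume v: "v \<in> orthogonal_comp (stoich_space B) \<inter> ker_mat C"
    have "orthogonal y v" if "y \<in> S" for y
    proof -
      obtain d u where y: "y = d + transpose C *v u" and d: "d \<in> stoich_space B"
        using \<open>y \<in> S\<close> unfolding S_def by auto
      have "d \<bullet> v = 0" using v d by (auto simp: orthogonal_comp_def orthogonal_def)
      moreover have "(transpose C *v u) \<bullet> v = 0"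
        using v by (simp add: dot_lmul_matrix ker_mat_def)
      ultimately show ?thesis by (simp add: y orthogonal_def inner_add_left)
    qed
    then show "v \<in> orthogonal_comp S" by (auto simp: orthogonal_comp_def)
  qed
qed

lemma c_iff_d:
  fixes C :: "real^'n^'p" and B :: "nat^'m^'n"
  shows "orthogonal_comp (stoich_space B) \<inter> ker_mat C = {0}
     \<longleftrightarrow> {d + w | d w. d \<in> stoich_space B \<and> w \<in> range (\<lambda>v. transpose C *v v)} = UNIV"
proof -
  define S where "S = {d + w | d w. d \<in> stoich_space B \<and> w \<in> range (\<lambda>v. transpose C *v v)}"
  have sub: "subspace S"
    unfolding S_def stoich_space_def
    by (intro subspace_sums subspace_span linear_subspace_image[OF matrix_vector_mul_linear subspace_UNIV])
  have "orthogonal_comp S = orthogonal_comp (stoich_space B) \<inter> ker_mat C"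
    unfolding S_def by (rule perp_sum)
  moreover have "orthogonal_comp S = {0} \<longleftrightarrow> S = UNIV"
  proof
    assume "orthogonal_comp S = {0}"
    then have "orthogonal_comp (orthogonal_comp S) = UNIV" by simp
    then show "S = UNIV" using orthogonal_comp_self[OF sub] by simp
  qed simp
  ultimately show ?thesis by (simp add: S_def)
qed

theorem theorem2:
  fixes B :: "nat^'m^'n" and A :: "real^'m^'m" and C :: "real^'n^'p"
  assumes m_le_n: "CARD('m) \<le> CARD('n)"
    and rankB: "rank (realB B) = CARD('m)"
    and no_zero_row: "\<forall>k. \<exists>j. B $ k $ j \<noteq> 0"
    and A_nonneg: "\<forall>i j. A $ i $ j \<ge> 0"
    and A_irred: "irreducible_matrix A"
    and C_entries: "\<forall>i k. C $ i $ k = 0 \<or> C $ i $ k \<ge> 1"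
    and no_bdry_eq: "\<forall>x. x \<in> nonneg_orthant \<and> (\<exists>k. x $ k = 0)
                        \<and> (\<exists>xb \<in> pos_orthant. x - xb \<in> stoich_space B)
                        \<longrightarrow> mak_field A B x \<noteq> 0"
  defines "Eplus \<equiv> {x \<in> pos_orthant. mak_field A B x = 0}"
  shows "(detectable_pos (mak_field A B) (out_map C)
            \<longleftrightarrow> (\<forall>x\<in>pos_orthant. \<forall>z\<in>pos_orthant.
                   rho x - rho z \<in> ker_mat C \<and> x \<in> Eplus \<and> z \<in> Eplus \<longrightarrow> x = z))
       \<and> ((\<forall>x\<in>pos_orthant. \<forall>z\<in>pos_orthant.
                   rho x - rho z \<in> ker_mat C \<and> x \<in> Eplus \<and> z \<in> Eplus \<longrightarrow> x = z)
            \<longleftrightarrow> orthogonal_comp (stoich_space B) \<inter> ker_mat C = {0})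
       \<and> (orthogonal_comp (stoich_space B) \<inter> ker_mat C = {0}
            \<longleftrightarrow> {d + w | d w. d \<in> stoich_space B \<and> w \<in> range (\<lambda>v. transpose C *v v)} = UNIV)"
proof -
  obtain e where cb: "cb A B e" using exists_cb[OF A_nonneg A_irred rankB] by blast
  have e: "e \<in> pos_orthant" using cb by (simp add: cb_def)
  have fe: "mak_field A B e = 0" using cb_field_zero[OF cb, of e 1] by simp
  let ?a = "detectable_pos (mak_field A B) (out_map C)"
  let ?b = "\<forall>x\<in>pos_orthant. \<forall>z\<in>pos_orthant.
                   rho x - rho z \<in> ker_mat C \<and> x \<in> Eplus \<and> z \<in> Eplus \<longrightarrow> x = z"
  let ?c = "orthogonal_comp (stoich_space B) \<inter> ker_mat C = {0}"
  have ab: ?b if a: ?a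
  proof (intro ballI impI)
    fix x z assume x: "x \<in> pos_orthant" and z: "z \<in> pos_orthant"
      and H: "rho x - rho z \<in> ker_mat C \<and> x \<in> Eplus \<and> z \<in> Eplus"
    have trc: "pos_trajectory (mak_field A B) (\<lambda>t. y)" if "y \<in> Eplus" for y
      using that by (simp add: pos_trajectory_def Eplus_def)
    have "out_map C x = out_map C z" using out_eq_iff[OF x z, of C] H by blast
    then have "((\<lambda>t::real. norm (x - z)) \<longlongrightarrow> 0) at_top"
      using a trc[of x] trc[of z] H unfolding detectable_pos_def by blast
    then have "norm (x - z) = 0"
      using tendsto_const_iff[of "at_top::real filter" "norm (x - z)" "0::real"] by simp
    then show "x = z" by simp
  qed
  have bc: ?c if b: ?b
  proof
    show "orthogonal_comp (stoich_space B) \<inter> ker_mat C \<subseteq> {0}"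
    proof
      fix v assume v: "v \<in> orthogonal_comp (stoich_space B) \<inter> ker_mat C"
      define z where "z = (\<chi> k. e$k * exp (v$k))"
      have zpos: "z \<in> pos_orthant" using e by (simp add: z_def pos_orthant_def)
      have rz: "rho z = rho e + v"
      proof -
        have enz: "e$k \<noteq> 0" for k using pos_nth[OF e, of k] by simp
        show ?thesis using pos_nth[OF e] by (simp add: z_def rho_def vec_eq_iff ln_mult enz)
      qed
      define c where "c = bcol B undefined \<bullet> v"
      have bc: "bcol B j \<bullet> v = c" for j
        using v orth_D[of v B] by (simp add: c_def)
      have mz: "\<forall>j. monom B j z = exp c * monom B j e"
      proof
        fix j
        have "monom B j z = exp (ln (monom B j z))" using monom_pos[OF zpos, of B j] by simp
        also have "\<dots> = exp (bcol B j \<bullet> rho e + c)"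
          by (simp add: ln_monom[OF zpos] rz inner_add_right bc)
        also have "\<dots> = exp c * exp (ln (monom B j e))"
          by (simp add: ln_monom[OF e] exp_add mult.commute)
        also have "\<dots> = exp c * monom B j e" using monom_pos[OF e, of B j] by simp
        finally show "monom B j z = exp c * monom B j e" .
      qed
      have fz: "mak_field A B z = 0" by (rule cb_field_zero[OF cb mz])
      have "rho z - rho e \<in> ker_mat C" using v rz by simp
      then have "z = e" using b zpos e fz fe by (simp add: Eplus_def)
      then have "exp (v$k) = 1" for k
        using e by (simp add: z_def vec_eq_iff pos_orthant_def) (metis less_irrefl mult_cancel_left1)
      then show "v \<in> {0}" by (simp add: vec_eq_iff)
    qed
    show "{0} \<subseteq> orthogonal_comp (stoich_space B) \<inter> ker_mat C"
      by (simp add: ker_mat_def subspace_0[OF subspace_orthogonal_comp])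
  qed
  have ca: ?a if c: ?c
    unfolding detectable_pos_def
  proof (intro allI impI)
    fix x z assume H: "pos_trajectory (mak_field A B) x \<and> pos_trajectory (mak_field A B) z
                   \<and> (\<forall>t\<ge>0. out_map C (x t) = out_map C (z t))"
    obtain xb lx where xb: "xb \<in> pos_orthant" "lx > 0" "\<forall>i. monom B i xb = lx * monom B i e"
      "(x \<longlongrightarrow> xb) at_top"
      using converge[OF A_nonneg A_irred no_bdry_eq cb] H by blast
    obtain zb lz where zb: "zb \<in> pos_orthant" "lz > 0" "\<forall>i. monom B i zb = lz * monom B i e"
      "(z \<longlongrightarrow> zb) at_top"
      using converge[OF A_nonneg A_irred no_bdry_eq cb] H by blast
    have evx: "\<forall>\<^sub>F t in at_top. x t \<in> pos_orthant"
      using H traj_pos by (auto simp: eventually_at_top_linorder intro!: exI[of _ 0])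
    have evz: "\<forall>\<^sub>F t in at_top. z t \<in> pos_orthant"
      using H traj_pos by (auto simp: eventually_at_top_linorder intro!: exI[of _ 0])
    have l1: "((\<lambda>t. out_map C (x t)) \<longlongrightarrow> out_map C xb) at_top"
      by (rule out_tendsto[OF xb(4) evx xb(1)])
    have l2: "((\<lambda>t. out_map C (x t)) \<longlongrightarrow> out_map C zb) at_top"
    proof (rule Lim_transform_eventually[OF out_tendsto[OF zb(4) evz zb(1)]])
      show "\<forall>\<^sub>F t in at_top. out_map C (z t) = out_map C (x t)"
        using H by (auto simp: eventually_at_top_linorder intro!: exI[of _ 0])
    qed
    have "out_map C xb = out_map C zb"
      using tendsto_unique[OF _ l1 l2] by simp
    then have k: "rho xb - rho zb \<in> ker_mat C" using out_eq_iff[OF xb(1) zb(1), of C] by blast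
    have "bcol B j \<bullet> (rho xb - rho zb) = ln lx - ln lz" for j
    proof -
      have "bcol B j \<bullet> (rho xb - rho zb) = ln (monom B j xb) - ln (monom B j zb)"
        by (simp add: inner_diff_right ln_monom[OF xb(1)] ln_monom[OF zb(1)])
      also have "\<dots> = ln lx - ln lz"
        using xb(2,3) zb(2,3) monom_pos[OF e, of B j] by (simp add: ln_mult)
      finally show ?thesis .
    qed
    then have "rho xb - rho zb \<in> orthogonal_comp (stoich_space B)"
      by (simp add: orth_D)
    then have "rho xb - rho zb = 0" using c k by blast
    then have "xb = zb"
      using xb(1) zb(1) by (simp add: rho_def vec_eq_iff pos_orthant_def)
    then have "((\<lambda>t. norm (x t - z t)) \<longlongrightarrow> norm (xb - zb)) at_top"
      by (intro tendsto_intros xb(4) zb(4))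
    then show "((\<lambda>t. norm (x t - z t)) \<longlongrightarrow> 0) at_top" using \<open>xb = zb\<close> by simp
  qed
  have cd: "?c \<longleftrightarrow> {d + w | d w. d \<in> stoich_space B \<and> w \<in> range (\<lambda>v. transpose C *v v)} = UNIV"
    by (rule c_iff_d)
  show ?thesis using ab bc ca cd by blast
qed

end
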